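(* For every integer $k>1$ and every integer $1\le\Delta\le k$, there exists a finite instance $\mathbf{X}\subset\mathbb{R}^d$ such that, with probability at least $1-e^{-\sqrt{k}/2}$, the set $C_{k+\Delta}$ of the first $k+\Delta$ centers chosen by $k$-means++ seeding satisfies $$\mathrm{cost}(\mathbf{X},C_{k+\Delta})>\frac18\ln\frac{k}{\Delta}\cdot\mathrm{OPT}_k(\mathbf{X}).$$
   Context: $\mathrm{cost}(x,C)=\min_{c\in C}\|x-c\|^2$, $\mathrm{cost}(\mathbf{Y},C)=\sum_{x\in\mathbf{Y}}\mathrm{cost}(x,C)$, $\mathrm{OPT}_k(\mathbf{X})=\min_{|C|=k}\mathrm{cost}(\mathbf{X},C)$. $k$-means++ seeding: $c_1$ uniform from $\mathbf{X}$, $C_1=\{c_1\}$; $C_{t+1}=C_t\cup\{x\}$ with $x$ chosen with probability $\mathrm{cost}(x,C_t)/\mathrm{cost}(\mathbf{X},C_t)$. *)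

theory Defs
  imports "HOL-Probability.Probability"
begin

text \<open>Points of R^d are represented as functions nat => real vanishing outside {..<d}.\<close>

definition Rd :: "nat \<Rightarrow> (nat \<Rightarrow> real) set" where
  "Rd d = {x. \<forall>i\<ge>d. x i = 0}"

definition sqdist :: "nat \<Rightarrow> (nat \<Rightarrow> real) \<Rightarrow> (nat \<Rightarrow> real) \<Rightarrow> real" where
  "sqdist d x c = (\<Sum>i<d. (x i - c i)^2)"

definition cost :: "nat \<Rightarrow> (nat \<Rightarrow> real) \<Rightarrow> (nat \<Rightarrow> real) set \<Rightarrow> real" where
  "cost d x C = Min ((\<lambda>c. sqdist d x c) ` C)"

definition cost_set :: "nat \<Rightarrow> (nat \<Rightarrow> real) set \<Rightarrow> (nat \<Rightarrow> real) set \<Rightarrow> real" where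
  "cost_set d Y C = (\<Sum>x\<in>Y. cost d x C)"

definition OPT :: "nat \<Rightarrow> nat \<Rightarrow> (nat \<Rightarrow> real) set \<Rightarrow> real" where
  "OPT d k X = Inf {cost_set d X C | C. C \<subseteq> Rd d \<and> finite C \<and> card C = k}"

text \<open>One step of k-means++ seeding: the first center is uniform on X; afterwards a point
  x is chosen with probability cost(x,C)/cost(X,C). (If cost(X,C) = 0, which cannot change the
  cost afterwards, we fall back to the uniform choice.)\<close>
definition kpp_step :: "nat \<Rightarrow> (nat \<Rightarrow> real) set \<Rightarrow> (nat \<Rightarrow> real) set \<Rightarrow> (nat \<Rightarrow> real) pmf" where
  "kpp_step d X C =
     (if C = {} \<or> cost_set d X C = 0 then pmf_of_set X
      else embed_pmf (\<lambda>x. if x \<in> X then cost d x C / cost_set d X C else 0))"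

fun kpp :: "nat \<Rightarrow> (nat \<Rightarrow> real) set \<Rightarrow> nat \<Rightarrow> (nat \<Rightarrow> real) set pmf" where
  "kpp d X 0 = return_pmf {}"
| "kpp d X (Suc t) = bind_pmf (kpp d X t) (\<lambda>C. map_pmf (\<lambda>x. insert x C) (kpp_step d X C))"

end

theory Submission
  imports Defs
begin


definition pt :: "real \<Rightarrow> nat \<Rightarrow> nat \<Rightarrow> (nat \<Rightarrow> real)" where
  "pt a j e = (\<lambda>l. if l = j then a else if l = e then 1 else 0)"

definition ap :: "real \<Rightarrow> nat \<Rightarrow> (nat \<Rightarrow> real)" where
  "ap a j = (\<lambda>l. if l = j then a else 0)"

lemma sum_sq_pt:
  assumes "j < d" "j' < d" "e < d" "e' < d" "j \<noteq> e" "j \<noteq> e'" "j' \<noteq> e" "j' \<noteq> e'"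
  shows "(\<Sum>l<d. (pt a j e l - pt b j' e' l)^2) =
     (if j = j' then (a-b)^2 else a^2 + b^2) + (if e = e' then 0 else 2)"
proof -
  have "(\<Sum>l<d. (pt a j e l - pt b j' e' l)^2) = (\<Sum>l\<in>{j,j',e,e'}. (pt a j e l - pt b j' e' l)^2)"
    using assms by (intro sum.mono_neutral_right) (auto simp: pt_def)
  also have "\<dots> = (if j = j' then (a-b)^2 else a^2 + b^2) + (if e = e' then 0 else 2)"
    using assms by (cases "j = j'"; cases "e = e'") (auto simp: pt_def power2_eq_square algebra_simps)
  finally show ?thesis .
qed

lemma sum_sq_pt_ap:
  assumes "j < d" "e < d" "j \<noteq> e"
  shows "(\<Sum>l<d. (pt a j e l - ap a j l)^2) = 1"
proof -
  have "(\<Sum>l<d. (pt a j e l - ap a j l)^2) = (\<Sum>l\<in>{e}. (pt a j e l - ap a j l)^2)"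
    using assms by (intro sum.mono_neutral_right) (auto simp: pt_def ap_def)
  also have "\<dots> = 1" using assms by (simp add: pt_def ap_def)
  finally show ?thesis .
qed

lemma cost_le: "finite C \<Longrightarrow> c \<in> C \<Longrightarrow> cost d x C \<le> sqdist d x c"
  unfolding cost_def by (intro Min_le) auto

lemma cost_eq: "finite C \<Longrightarrow> C \<noteq> {} \<Longrightarrow> \<exists>c\<in>C. cost d x C = sqdist d x c"
proof -
  assume "finite C" "C \<noteq> {}"
  then have "Min ((\<lambda>c. sqdist d x c) ` C) \<in> (\<lambda>c. sqdist d x c) ` C" by (intro Min_in) auto
  then show ?thesis unfolding cost_def by auto
qed

lemma sqdist_nonneg: "sqdist d x c \<ge> 0"
  unfolding sqdist_def by (intro sum_nonneg) auto

lemma cost_nonneg: "finite C \<Longrightarrow> C \<noteq> {} \<Longrightarrow> cost d x C \<ge> 0"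
  using cost_eq[of C d x] sqdist_nonneg by metis

lemma cost_ge: "finite C \<Longrightarrow> C \<noteq> {} \<Longrightarrow> (\<And>c. c \<in> C \<Longrightarrow> sqdist d x c \<ge> r) \<Longrightarrow> cost d x C \<ge> r"
  using cost_eq[of C d x] by metis

lemma cost_set_nonneg: "finite C \<Longrightarrow> C \<noteq> {} \<Longrightarrow> cost_set d Y C \<ge> 0"
  unfolding cost_set_def by (intro sum_nonneg cost_nonneg)

lemma sqdist_self: "sqdist d x x = 0"
  unfolding sqdist_def by simp

lemma cost_in: "finite C \<Longrightarrow> x \<in> C \<Longrightarrow> cost d x C = 0"
  using cost_le[of C x d x] cost_nonneg[of C d x] sqdist_self[of d x] by auto

locale inst =
  fixes k n :: nat and a :: real
  assumes k1: "k \<ge> 1" and n1: "n \<ge> 1"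
begin

definition "dd = k + k * n"
definition "q j i = pt a j (k + j * n + i)"
definition "XX = (\<lambda>(j,i). q j i) ` ({..<k} \<times> {..<n})"
definition "K j = q j ` {..<n}"
definition "Unc C = {j\<in>{..<k}. C \<inter> K j = {}}"
definition "u C = card (Unc C)"
definition "UX C = (\<Union>j\<in>Unc C. K j)"
definition "V = 2 + 2 * a^2"

lemma e_lt: "j < k \<Longrightarrow> i < n \<Longrightarrow> k + j * n + i < dd"
proof -
  assume "j < k" "i < n"
  then have "j * n + i < (j+1) * n" by simp
  also have "\<dots> \<le> k * n" using \<open>j < k\<close> by (intro mult_right_mono) auto
  finally show ?thesis unfolding dd_def by simp
qed

lemma e_inj:
  assumes "i < n" "i' < n" "k + j * n + i = k + j' * n + i'"
  shows "j = j' \<and> i = i'"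
proof -
  have h: "j * n + i = j' * n + i'" using assms by simp
  have "(j * n + i) div n = (j' * n + i') div n" "(j * n + i) mod n = (j' * n + i') mod n" using h by auto
  then show ?thesis using assms by auto
qed

lemma sq_qq:
  assumes "j < k" "i < n" "j' < k" "i' < n"
  shows "sqdist dd (q j i) (q j' i') = (if j = j' then 0 else 2 * a^2) + (if j = j' \<and> i = i' then 0 else 2)"
proof -
  have "sqdist dd (q j i) (q j' i') = (if j = j' then (a-a)^2 else a^2 + a^2) + (if k + j * n + i = k + j' * n + i' then 0 else 2)"
    unfolding sqdist_def q_def
    using assms e_lt[of j i] e_lt[of j' i'] by (intro sum_sq_pt) (auto simp: dd_def)
  then show ?thesis using e_inj[of i i' j j'] assms by auto
qed

lemma q_inj:
  assumes "j < k" "i < n" "j' < k" "i' < n" "q j i = q j' i'"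
  shows "j = j' \<and> i = i'"
proof -
  have "q j i (k + j * n + i) = 1" unfolding q_def pt_def using assms by auto
  moreover have "q j' i' (k + j * n + i) = (if k + j * n + i = k + j' * n + i' then 1 else 0)"
    unfolding q_def pt_def using assms by auto
  ultimately show ?thesis using assms e_inj[of i i' j j'] by (auto split: if_splits)
qed

lemma inj_q: "inj_on (\<lambda>(j,i). q j i) ({..<k} \<times> {..<n})"
  by (auto simp: inj_on_def dest: q_inj)

lemma finite_XX: "finite XX" unfolding XX_def by auto

lemma card_XX: "card XX = k * n"
  unfolding XX_def by (subst card_image[OF inj_q]) auto

lemma XX_ne: "XX \<noteq> {}" using card_XX k1 n1 by auto

lemma XX_Rd: "XX \<subseteq> Rd dd"
proof
  fix x assume "x \<in> XX"
  then obtain j i where ji: "j < k" "i < n" "x = q j i" unfolding XX_def by auto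
  have "k + j * n + i < dd" by (rule e_lt[OF ji(1,2)])
  moreover have "j < dd" using ji unfolding dd_def by simp
  ultimately show "x \<in> Rd dd" unfolding Rd_def ji(3) q_def pt_def by auto
qed

lemma K_sub: "j < k \<Longrightarrow> K j \<subseteq> XX" unfolding K_def XX_def by auto

lemma card_K: "j < k \<Longrightarrow> card (K j) = n"
  unfolding K_def by (subst card_image) (auto simp: inj_on_def dest: q_inj)

lemma K_disj: "j < k \<Longrightarrow> j' < k \<Longrightarrow> j \<noteq> j' \<Longrightarrow> K j \<inter> K j' = {}"
  unfolding K_def by (auto dest: q_inj)

lemma XX_K: "x \<in> XX \<Longrightarrow> \<exists>j<k. x \<in> K j"
  unfolding XX_def K_def by auto

lemma in_K: "x \<in> K j \<Longrightarrow> \<exists>i<n. x = q j i" unfolding K_def by auto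

lemma sq_K:
  assumes "j < k" "j' < k" "x \<in> K j" "y \<in> K j'"
  shows "sqdist dd x y = (if j = j' then 0 else 2 * a^2) + (if x = y then 0 else 2)"
  using assms in_K[of x j] in_K[of y j'] sq_qq by (auto dest: q_inj)

lemma K_unique: "j < k \<Longrightarrow> j' < k \<Longrightarrow> x \<in> K j \<Longrightarrow> x \<in> K j' \<Longrightarrow> j = j'"
  using K_disj by blast

lemma cost_unc:
  assumes "j < k" "x \<in> K j" "C \<subseteq> XX" "C \<noteq> {}" "C \<inter> K j = {}"
  shows "cost dd x C = V"
proof -
  have fin: "finite C" using assms(3) finite_XX finite_subset by blast
  have *: "sqdist dd x c = V" if cC: "c \<in> C" for c
  proof -
    obtain j' where j': "j' < k" "c \<in> K j'" using XX_K assms(3) cC by blast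
    have "j' \<noteq> j" using assms(5) j' cC by auto
    moreover have "x \<noteq> c" using assms(5) assms(2) cC by auto
    ultimately show ?thesis using sq_K[OF assms(1) j'(1) assms(2) j'(2)] unfolding V_def by simp
  qed
  obtain c where "c \<in> C" "cost dd x C = sqdist dd x c" using cost_eq[OF fin assms(4)] by blast
  then show ?thesis using * by simp
qed

lemma cost_ge2:
  assumes "x \<in> XX" "x \<notin> C" "C \<subseteq> XX" "C \<noteq> {}"
  shows "cost dd x C \<ge> 2"
proof -
  have fin: "finite C" using assms(3) finite_XX finite_subset by blast
  show ?thesis
  proof (rule cost_ge[OF fin assms(4)])
    fix c assume "c \<in> C"
    obtain j where j: "j < k" "x \<in> K j" using XX_K assms(1) by blast
    obtain j' where j': "j' < k" "c \<in> K j'" using XX_K assms(3) \<open>c \<in> C\<close> by blast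
    have "x \<noteq> c" using assms(2) \<open>c \<in> C\<close> by auto
    then show "sqdist dd x c \<ge> 2" using sq_K[OF j(1) j'(1) j(2) j'(2)] by auto
  qed
qed

lemma UX_sub: "UX C \<subseteq> XX" unfolding UX_def Unc_def using K_sub by auto

lemma UX_C: "UX C \<inter> C = {}" unfolding UX_def Unc_def by auto

lemma card_UX: "card (UX C) = u C * n"
proof -
  have "card (UX C) = (\<Sum>j\<in>Unc C. card (K j))"
    unfolding UX_def
    apply (intro card_UN_disjoint)
    apply (auto simp: Unc_def K_def)[2]
    using K_disj by (auto simp: Unc_def)
  also have "\<dots> = (\<Sum>j\<in>Unc C. n)" by (intro sum.cong) (auto simp: Unc_def card_K)
  finally show ?thesis by (simp add: u_def)
qed

lemma u_le: "u C \<le> k"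
proof -
  have "card (Unc C) \<le> card {..<k}" by (rule card_mono) (auto simp: Unc_def)
  then show ?thesis by (simp add: u_def)
qed

lemma u_lt: assumes "x \<in> C" "x \<in> XX" shows "u C < k"
proof -
  obtain j where j: "j < k" "x \<in> K j" using XX_K assms by blast
  have "Unc C \<subseteq> {..<k} - {j}" using j assms unfolding Unc_def by auto
  then have "u C \<le> card ({..<k} - {j})" unfolding u_def by (intro card_mono) auto
  then show ?thesis using j by simp
qed

lemma u_empty: "u {} = k" unfolding u_def Unc_def by simp

lemma u_insert:
  assumes "x \<in> XX"
  shows "u (insert x C) = (if x \<in> UX C then u C - 1 else u C)"
proof -
  obtain j where j: "j < k" "x \<in> K j" using XX_K assms by blast
  have eq: "Unc (insert x C) = Unc C - {j}"
    unfolding Unc_def using j K_unique by auto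
  have iff: "x \<in> UX C \<longleftrightarrow> j \<in> Unc C"
    unfolding UX_def using j K_unique by (auto simp: Unc_def)
  have fin: "finite (Unc C)" unfolding Unc_def by auto
  show ?thesis unfolding u_def eq using iff fin by (auto simp: card_Diff_singleton)
qed

lemma cost_set_lb:
  assumes "C \<subseteq> XX" "C \<noteq> {}"
  shows "cost_set dd XX C \<ge> V * card (UX C) + 2 * card (XX - UX C - C)"
proof -
  have fin: "finite C" using assms(1) finite_XX finite_subset by blast
  have "cost_set dd XX C = (\<Sum>x\<in>UX C. cost dd x C) + (\<Sum>x\<in>XX - UX C. cost dd x C)"
    unfolding cost_set_def using UX_sub finite_XX by (metis sum.subset_diff add.commute)
  moreover have "(\<Sum>x\<in>UX C. cost dd x C) = V * card (UX C)"
  proof -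
    have "(\<Sum>x\<in>UX C. cost dd x C) = (\<Sum>x\<in>UX C. V)"
    proof (intro sum.cong refl)
      fix x assume "x \<in> UX C"
      then obtain j where "j \<in> Unc C" "x \<in> K j" unfolding UX_def by auto
      then show "cost dd x C = V" using cost_unc[OF _ _ assms] unfolding Unc_def by auto
    qed
    then show ?thesis by simp
  qed
  moreover have "(\<Sum>x\<in>XX - UX C. cost dd x C) \<ge> (\<Sum>x\<in>XX - UX C - C. cost dd x C)"
    using finite_XX by (intro sum_mono2) (auto intro: cost_nonneg[OF fin assms(2)])
  moreover have "(\<Sum>x\<in>XX - UX C - C. cost dd x C) \<ge> (\<Sum>x\<in>XX - UX C - C. 2)"
    by (intro sum_mono cost_ge2[OF _ _ assms]) auto
  ultimately show ?thesis by simp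
qed

lemma card_rest: assumes "C \<subseteq> XX" shows "real (card (XX - UX C - C)) \<ge> real (k * n) - real (u C * n) - real (card C)"
proof -
  have "card (XX - UX C) = k * n - u C * n"
    using card_Diff_subset[OF finite_subset[OF UX_sub finite_XX] UX_sub] card_XX card_UX by simp
  moreover have "u C * n \<le> k * n" using u_le by simp
  moreover have "card (XX - UX C) - card C \<le> card (XX - UX C - C)"
    by (rule diff_card_le_card_Diff) (use finite_XX \<open>C \<subseteq> XX\<close> finite_subset in auto)
  ultimately show ?thesis by linarith
qed

lemma cost_set_lb2:
  assumes "C \<subseteq> XX" "C \<noteq> {}"
  shows "cost_set dd XX C \<ge> 2 * (real (k * n) - real (card C))"
proof -
  have fin: "finite C" using assms(1) finite_XX finite_subset by blast
  have "cost_set dd XX C \<ge> (\<Sum>x\<in>XX - C. cost dd x C)"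
    unfolding cost_set_def using finite_XX by (intro sum_mono2) (auto intro: cost_nonneg[OF fin assms(2)])
  moreover have "(\<Sum>x\<in>XX - C. cost dd x C) \<ge> (\<Sum>x\<in>XX - C. 2)"
    by (intro sum_mono cost_ge2[OF _ _ assms]) auto
  moreover have "card (XX - C) = k * n - card C"
    using card_Diff_subset[OF fin assms(1)] card_XX by simp
  moreover have "card C \<le> k * n" using card_mono[OF finite_XX assms(1)] card_XX by simp
  ultimately show ?thesis by (simp add: of_nat_diff)
qed


definition "fw C = (\<lambda>x. if x \<in> XX then cost dd x C / cost_set dd XX C else 0)"

lemma fw_props:
  assumes "C \<subseteq> XX" "C \<noteq> {}" "cost_set dd XX C \<noteq> 0"
  shows "\<And>x. 0 \<le> fw C x" "(\<integral>\<^sup>+x. ennreal (fw C x) \<partial>count_space UNIV) = 1"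
proof -
  have fin: "finite C" using assms(1) finite_XX finite_subset by blast
  have pos: "cost_set dd XX C > 0" using cost_set_nonneg[OF fin assms(2), of dd XX] assms(3) by linarith
  show nn: "\<And>x. 0 \<le> fw C x" unfolding fw_def using pos cost_nonneg[OF fin assms(2)] by auto
  have "(\<integral>\<^sup>+x. ennreal (fw C x) \<partial>count_space UNIV) = (\<Sum>x\<in>XX. ennreal (fw C x))"
    by (intro nn_integral_count_space') (auto simp: finite_XX fw_def)
  also have "\<dots> = ennreal (\<Sum>x\<in>XX. fw C x)" using nn by simp
  also have "(\<Sum>x\<in>XX. fw C x) = (\<Sum>x\<in>XX. cost dd x C) / cost_set dd XX C"
    unfolding fw_def by (simp add: sum_divide_distrib)
  also have "\<dots> = 1" using assms(3) unfolding cost_set_def by simp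
  finally show "(\<integral>\<^sup>+x. ennreal (fw C x) \<partial>count_space UNIV) = 1" by simp
qed

lemma step_embed:
  assumes "C \<subseteq> XX" "C \<noteq> {}" "cost_set dd XX C \<noteq> 0"
  shows "kpp_step dd XX C = embed_pmf (fw C)"
  using assms unfolding kpp_step_def fw_def by simp

lemma step_set: assumes "C \<subseteq> XX" shows "set_pmf (kpp_step dd XX C) \<subseteq> XX"
proof (cases "C = {} \<or> cost_set dd XX C = 0")
  case True
  then show ?thesis unfolding kpp_step_def using finite_XX XX_ne by simp
next
  case False
  then show ?thesis using step_embed[OF assms] fw_props[OF assms] 
    by (auto simp: set_embed_pmf fw_def)
qed

lemma step_prob:
  assumes "C \<subseteq> XX" "real (card C) \<le> 2 * real k" "real n \<ge> 4 * real k"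
  shows "measure_pmf.prob (kpp_step dd XX C) (UX C) * (real (u C) * V + (real k - real (u C))) \<le> real (u C) * V"
proof (cases "C = {} \<or> cost_set dd XX C = 0")
  case True
  then have "kpp_step dd XX C = pmf_of_set XX" unfolding kpp_step_def by simp
  then have P: "measure_pmf.prob (kpp_step dd XX C) (UX C) = real (u C * n) / real (k * n)"
    using finite_XX XX_ne UX_sub[of C] card_XX card_UX[of C]
    by (simp add: measure_pmf_of_set Int_absorb1)
  have V1: "V \<ge> 1" unfolding V_def by (simp add: add_increasing)
  have uk: "real (u C) \<le> real k" using u_le by simp
  have "real (u C * n) / real (k * n) = real (u C) / real k" using n1 by simp
  moreover have "real (u C) / real k * (real (u C) * V + (real k - real (u C))) \<le> real (u C) * V"
  proof -
    have "real (u C) * V + (real k - real (u C)) \<le> real k * V"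
    proof -
      have "(real k - real (u C)) * (V - 1) \<ge> 0" using V1 uk by (intro mult_nonneg_nonneg) auto
      then show ?thesis by (simp add: algebra_simps)
    qed
    then have "real (u C) * (real (u C) * V + (real k - real (u C))) \<le> real (u C) * (real k * V)"
      by (intro mult_left_mono) auto
    then show ?thesis using k1 by (simp add: field_simps)
  qed
  ultimately show ?thesis using P by simp
next
  case False
  then have ne: "C \<noteq> {}" and S0: "cost_set dd XX C \<noteq> 0" by auto
  have fin: "finite C" using assms(1) finite_XX finite_subset by blast
  have pos: "cost_set dd XX C > 0" using cost_set_nonneg[OF fin ne, of dd XX] S0 by linarith
  define S where "S = cost_set dd XX C"
  have "measure_pmf.prob (kpp_step dd XX C) (UX C) = (\<Sum>x\<in>UX C. fw C x)"
    using step_embed[OF assms(1) ne S0] fw_props[OF assms(1) ne S0]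
    by (simp add: measure_measure_pmf_finite finite_subset[OF UX_sub finite_XX] pmf_embed_pmf)
  also have "\<dots> = (\<Sum>x\<in>UX C. V / S)"
  proof (intro sum.cong refl)
    fix x assume "x \<in> UX C"
    then obtain j where "j \<in> Unc C" "x \<in> K j" unfolding UX_def by auto
    then show "fw C x = V / S" unfolding fw_def S_def using cost_unc[OF _ _ assms(1) ne] UX_sub \<open>x \<in> UX C\<close>
      unfolding Unc_def by auto
  qed
  also have "\<dots> = real (u C * n) * V / S" using card_UX[of C] by simp
  finally have P: "measure_pmf.prob (kpp_step dd XX C) (UX C) = real (u C) * real n * V / S" by simp
  have Sge: "S \<ge> V * real (u C * n) + 2 * (real (k * n) - real (u C * n) - real (card C))"
  proof -
    have a: "S \<ge> V * real (card (UX C)) + 2 * real (card (XX - UX C - C))"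
      using cost_set_lb[OF assms(1) ne] unfolding S_def by simp
    have c: "real (card (UX C)) = real (u C * n)" using card_UX[of C] by simp
    from a c have a2: "S \<ge> V * real (u C * n) + 2 * real (card (XX - UX C - C))" by simp
    have "2 * real (card (XX - UX C - C)) \<ge> 2 * (real (k * n) - real (u C * n) - real (card C))"
      using card_rest[OF assms(1)] by (intro mult_left_mono) auto
    then show ?thesis using a2 by (rule add_left_mono[THEN order_trans])
  qed
  obtain x where x: "x \<in> C" using ne by blast
  have ulk: "u C < k" using u_lt[OF x] assms(1) x by auto
  then have "real k - real (u C) \<ge> 1" by linarith
  then have "real n * (real k - real (u C)) \<ge> real n" using n1 by (simp add: mult_le_cancel_left1)
  then have key: "2 * real (card C) \<le> real n * (real k - real (u C))" using assms(2,3) by linarith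
  have Sge2: "S \<ge> real n * (real (u C) * V + (real k - real (u C)))"
    using Sge key by (simp add: algebra_simps)
  have "real (u C) * real n * V / S * (real (u C) * V + (real k - real (u C)))
        = real (u C) * V * (real n * (real (u C) * V + (real k - real (u C)))) / S"
    by (simp add: field_simps)
  also have "\<dots> \<le> real (u C) * V * S / S"
    using Sge2 pos unfolding V_def S_def
    by (intro divide_right_mono mult_left_mono) (auto simp: add_nonneg_nonneg)
  also have "\<dots> = real (u C) * V" using pos unfolding S_def by simp
  finally show ?thesis using P by simp
qed


lemma kpp_supp: "C \<in> set_pmf (kpp dd XX t) \<Longrightarrow> C \<subseteq> XX \<and> card C \<le> t \<and> (t > 0 \<longrightarrow> C \<noteq> {})"
proof (induction t arbitrary: C)
  case 0
  then show ?case by simp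
next
  case (Suc t)
  then obtain C0 x where C0: "C0 \<in> set_pmf (kpp dd XX t)" and x: "x \<in> set_pmf (kpp_step dd XX C0)"
    and C: "C = insert x C0" by auto
  have h: "C0 \<subseteq> XX" "card C0 \<le> t" using Suc.IH[OF C0] by auto
  have "x \<in> XX" using step_set[OF h(1)] x by auto
  moreover have "finite C0" using h(1) finite_XX finite_subset by blast
  ultimately show ?case using h C by (auto simp: card_insert_if)
qed

definition "rho v = 2 + (real k - real v) / (real v * V)"
definition "beta w = (\<Prod>v\<in>{w<..k}. rho v)"

lemma V_pos: "V > 0" unfolding V_def by (simp add: add_pos_nonneg)

lemma rho_ge1: "v \<le> k \<Longrightarrow> rho v \<ge> 1"
  unfolding rho_def using V_pos by (auto intro!: divide_nonneg_pos add_increasing2)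

lemma beta_ge1: "beta w \<ge> 1"
  unfolding beta_def by (intro prod_ge_1) (auto intro: rho_ge1)

lemma beta_k: "beta k = 1" unfolding beta_def by simp

lemma beta_step: "1 \<le> w \<Longrightarrow> w \<le> k \<Longrightarrow> beta (w - 1) = rho w * beta w"
proof -
  assume "1 \<le> w" "w \<le> k"
  then have "{w - 1<..k} = insert w {w<..k}" by auto
  then show ?thesis unfolding beta_def by simp
qed

lemma beta_mono: "w \<le> w' \<Longrightarrow> beta w' \<le> beta w"
proof -
  assume "w \<le> w'"
  then have sub: "{w'<..k} \<subseteq> {w<..k}" by auto
  have "beta w = (\<Prod>v\<in>{w<..k} - {w'<..k}. rho v) * beta w'"
    unfolding beta_def by (rule prod.subset_diff[OF sub]) auto
  moreover have "(\<Prod>v\<in>{w<..k} - {w'<..k}. rho v) \<ge> 1" by (intro prod_ge_1) (auto intro: rho_ge1)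
  moreover have "beta w' \<ge> 0" using beta_ge1[of w'] by simp
  ultimately show ?thesis by (metis mult_le_cancel_right1 mult.commute order_trans linorder_not_le beta_ge1 mult_le_cancel_right2 )
qed

lemma step_exp:
  assumes "C \<subseteq> XX" "real (card C) \<le> 2 * real k" "real n \<ge> 4 * real k"
  shows "(\<integral>\<^sup>+x. ennreal (beta (u (insert x C))) \<partial>kpp_step dd XX C) \<le> ennreal (2 * beta (u C))"
proof -
  define M where "M = kpp_step dd XX C"
  define w where "w = u C"
  define P where "P = measure_pmf.prob M (UX C)"
  define \<delta> where "\<delta> = beta (w - 1) - beta w"
  have \<delta>nn: "\<delta> \<ge> 0" unfolding \<delta>_def using beta_mono[of "w - 1" w] by simp
  have ae: "AE x in M. ennreal (beta (u (insert x C))) = ennreal (beta w) + ennreal \<delta> * indicator (UX C) x"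
  proof (subst AE_measure_pmf_iff, intro ballI)
    fix x assume "x \<in> set_pmf M"
    then have xX: "x \<in> XX" using step_set[OF assms(1)] unfolding M_def by auto
    show "ennreal (beta (u (insert x C))) = ennreal (beta w) + ennreal \<delta> * indicator (UX C) x"
    proof (cases "x \<in> UX C")
      case True
      then show ?thesis using u_insert[OF xX] \<delta>nn beta_ge1[of w] unfolding w_def \<delta>_def
        by (simp add: ennreal_plus[symmetric] del: ennreal_plus)
    next
      case False
      then show ?thesis using u_insert[OF xX] unfolding w_def by simp
    qed
  qed
  have "(\<integral>\<^sup>+x. ennreal (beta (u (insert x C))) \<partial>M) = (\<integral>\<^sup>+x. ennreal (beta w) + ennreal \<delta> * indicator (UX C) x \<partial>M)"
    by (rule nn_integral_cong_AE[OF ae])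
  also have "\<dots> = (\<integral>\<^sup>+x. ennreal (beta w) \<partial>M) + (\<integral>\<^sup>+x. ennreal \<delta> * indicator (UX C) x \<partial>M)"
    by (rule nn_integral_add) auto
  also have "\<dots> = ennreal (beta w) + ennreal \<delta> * emeasure M (UX C)"
    by (subst nn_integral_cmult_indicator) (auto simp: measure_pmf.emeasure_space_1)
  also have "\<dots> = ennreal (beta w + \<delta> * P)"
    unfolding P_def using \<delta>nn beta_ge1[of w]
    by (simp add: measure_pmf.emeasure_eq_measure ennreal_mult[symmetric] ennreal_plus[symmetric] del: ennreal_plus)
  also have "\<dots> \<le> ennreal (2 * beta w)"
  proof (rule ennreal_leI)
    show "beta w + \<delta> * P \<le> 2 * beta w"
    proof (cases "w = 0")
      case True
      then show ?thesis unfolding \<delta>_def using beta_ge1[of w] by simp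
    next
      case False
      have wk: "w \<le> k" using u_le unfolding w_def by simp
      have rw: "beta (w - 1) = rho w * beta w" using beta_step[of w] False wk by simp
      have wpos: "real w * V > 0" using False V_pos by simp
      have Pb: "P * (real w * V + (real k - real w)) \<le> real w * V"
        using step_prob[OF assms] unfolding P_def M_def w_def by simp
      have "\<delta> = beta w * ((real w * V + (real k - real w)) / (real w * V))"
      proof -
        have wne: "real w * V \<noteq> 0" using wpos by linarith
        have "rho w - 1 = (real w * V + (real k - real w)) / (real w * V)"
          unfolding rho_def using wne by (simp add: field_simps)
        then show ?thesis unfolding \<delta>_def rw by (simp add: algebra_simps)
      qed
      then have "\<delta> * P = beta w * (P * (real w * V + (real k - real w)) / (real w * V))"
        by (simp add: field_simps)
      also have "\<dots> \<le> beta w * 1"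
        using Pb wpos beta_ge1[of w] by (intro mult_left_mono) (auto simp: divide_le_eq)
      finally show ?thesis by simp
    qed
  qed
  finally show ?thesis unfolding M_def w_def .
qed

lemma potential:
  assumes "real n \<ge> 4 * real k"
  shows "t \<le> 2 * k \<Longrightarrow> (\<integral>\<^sup>+C. ennreal (beta (u C)) \<partial>kpp dd XX t) \<le> ennreal (2 ^ t)"
proof (induction t)
  case 0
  then show ?case by (simp add: u_empty beta_k)
next
  case (Suc t)
  have "(\<integral>\<^sup>+C. ennreal (beta (u C)) \<partial>kpp dd XX (Suc t))
      = (\<integral>\<^sup>+C. (\<integral>\<^sup>+x. ennreal (beta (u (insert x C))) \<partial>kpp_step dd XX C) \<partial>kpp dd XX t)"
    by simp
  also have "\<dots> \<le> (\<integral>\<^sup>+C. ennreal (2 * beta (u C)) \<partial>kpp dd XX t)"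
  proof (rule nn_integral_mono_AE, subst AE_measure_pmf_iff, intro ballI)
    fix C assume "C \<in> set_pmf (kpp dd XX t)"
    then have "C \<subseteq> XX" "card C \<le> t" using kpp_supp by auto
    moreover have "real t \<le> 2 * real k" using Suc.prems by simp
    ultimately show "(\<integral>\<^sup>+x. ennreal (beta (u (insert x C))) \<partial>kpp_step dd XX C) \<le> ennreal (2 * beta (u C))"
      using step_exp[of C] assms by simp
  qed
  also have "\<dots> = ennreal 2 * (\<integral>\<^sup>+C. ennreal (beta (u C)) \<partial>kpp dd XX t)"
  proof -
    have "\<And>C. ennreal (2 * beta (u C)) = 2 * ennreal (beta (u C))"
      using beta_ge1 by (subst ennreal_mult) (auto intro: order_trans[OF zero_le_one])
    then show ?thesis by (simp add: nn_integral_cmult)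
  qed
  also have "\<dots> \<le> ennreal 2 * ennreal (2 ^ t)"
    using Suc by (intro mult_left_mono) auto
  also have "\<dots> = ennreal (2 ^ Suc t)" by (simp add: ennreal_mult'' ennreal_power)
  finally show ?case .
qed


lemma markov:
  assumes "real n \<ge> 4 * real k" "N \<le> 2 * k"
  shows "measure_pmf.prob (kpp dd XX N) {C. u C \<le> b} \<le> 2 ^ N / beta b"
proof -
  define M where "M = kpp dd XX N"
  have bpos: "beta b > 0" using beta_ge1[of b] by simp
  have "emeasure M {C. u C \<le> b} = (\<integral>\<^sup>+C. indicator {C. u C \<le> b} C \<partial>M)"
    by simp
  also have "\<dots> \<le> (\<integral>\<^sup>+C. ennreal (beta (u C)) * ennreal (1 / beta b) \<partial>M)"
  proof (rule nn_integral_mono)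
    fix C
    show "indicator {C. u C \<le> b} C \<le> ennreal (beta (u C)) * ennreal (1 / beta b)"
    proof (cases "u C \<le> b")
      case True
      then have "beta b \<le> beta (u C)" by (rule beta_mono)
      then have "1 \<le> beta (u C) / beta b" using bpos by simp
      then have "1 \<le> ennreal (beta (u C) / beta b)" by (simp add: ennreal_1[symmetric] del: ennreal_1)
      also have "ennreal (beta (u C) / beta b) = ennreal (beta (u C)) * ennreal (1 / beta b)"
        using bpos beta_ge1[of "u C"] by (subst ennreal_mult[symmetric]) auto
      finally show ?thesis using True by simp
    qed simp
  qed
  also have "\<dots> = (\<integral>\<^sup>+C. ennreal (beta (u C)) \<partial>M) * ennreal (1 / beta b)"
    by (rule nn_integral_multc) auto
  also have "\<dots> \<le> ennreal (2 ^ N) * ennreal (1 / beta b)"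
    using potential[OF assms(1) assms(2)] unfolding M_def by (intro mult_right_mono) auto
  also have "\<dots> = ennreal (2 ^ N / beta b)"
    using bpos by (subst ennreal_mult[symmetric]) auto
  finally have "ennreal (measure_pmf.prob M {C. u C \<le> b}) \<le> ennreal (2 ^ N / beta b)"
    by (simp add: measure_pmf.emeasure_eq_measure)
  then show ?thesis unfolding M_def using bpos by (subst (asm) ennreal_le_iff) auto
qed

lemma OPT_le:
  assumes "a \<noteq> 0"
  shows "OPT dd k XX \<le> real (k * n)"
proof -
  define A where "A = ap a ` {..<k}"
  have inj: "inj_on (ap a) {..<k}"
  proof (rule inj_onI)
    fix j j' assume "j \<in> {..<k}" "j' \<in> {..<k}" "ap a j = ap a j'"
    then have "ap a j j = ap a j' j" by simp
    then show "j = j'" using assms unfolding ap_def by (auto split: if_splits)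
  qed
  have cardA: "card A = k" unfolding A_def using card_image[OF inj] by simp
  have finA: "finite A" unfolding A_def by simp
  have ARd: "A \<subseteq> Rd dd" unfolding A_def Rd_def ap_def dd_def by auto
  have costA: "cost_set dd XX A \<le> real (k * n)"
  proof -
    have "cost_set dd XX A \<le> (\<Sum>x\<in>XX. 1)"
      unfolding cost_set_def
    proof (rule sum_mono)
      fix x assume "x \<in> XX"
      then obtain j i where ji: "j < k" "i < n" "x = q j i" unfolding XX_def by auto
      have "cost dd x A \<le> sqdist dd x (ap a j)"
        using finA ji by (intro cost_le) (auto simp: A_def)
      also have "\<dots> = 1"
        unfolding sqdist_def ji(3) q_def
        using e_lt[OF ji(1,2)] ji by (intro sum_sq_pt_ap) (auto simp: dd_def)
      finally show "cost dd x A \<le> 1" .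
    qed
    then show ?thesis using card_XX by simp
  qed
  define S where "S = {cost_set dd XX C |C. C \<subseteq> Rd dd \<and> finite C \<and> card C = k}"
  have inS: "cost_set dd XX A \<in> S" unfolding S_def using ARd finA cardA by auto
  have bdd: "bdd_below S"
  proof (rule bdd_belowI)
    fix s assume "s \<in> S"
    then obtain C where C: "s = cost_set dd XX C" "finite C" "card C = k" unfolding S_def by auto
    then have "C \<noteq> {}" using k1 by auto
    then show "0 \<le> s" using C cost_set_nonneg by simp
  qed
  have "OPT dd k XX = Inf S" unfolding OPT_def S_def ..
  also have "\<dots> \<le> cost_set dd XX A" by (rule cInf_lower[OF inS bdd])
  finally show ?thesis using costA by simp
qed

end




lemma harm_ln: "b \<le> k \<Longrightarrow> ln ((real k + 1) / (real b + 1)) \<le> (\<Sum>v\<in>{b<..k}. 1 / real v)"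
proof (induction k)
  case 0
  then show ?case by simp
next
  case (Suc k)
  show ?case
  proof (cases "b = Suc k")
    case True
    then show ?thesis by simp
  next
    case False
    then have bk: "b \<le> k" using Suc.prems by simp
    have set: "{b<..Suc k} = insert (Suc k) {b<..k}" using bk by auto
    have "ln ((real (Suc k) + 1) / (real b + 1)) = ln ((real k + 1) / (real b + 1)) + ln ((real k + 2) / (real k + 1))"
      by (simp add: ln_div)
    also have "ln ((real k + 2) / (real k + 1)) \<le> (real k + 2) / (real k + 1) - 1"
      by (rule ln_le_minus_one) (simp add: add_pos_pos)
    also have "(real k + 2) / (real k + 1) - 1 = 1 / real (Suc k)"
      by (simp add: field_simps)
    finally show ?thesis using Suc.IH[OF bk] set by simp
  qed
qed

lemma ln_lower: "(y::real) \<ge> 0 \<Longrightarrow> ln (1 + y) \<ge> y / (1 + y)"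
proof -
  assume y: "y \<ge> 0"
  have "ln (1 / (1 + y)) \<le> 1 / (1 + y) - 1" using y by (intro ln_le_minus_one) simp
  moreover have "ln (1 / (1 + y)) = - ln (1 + y)" using y by (simp add: ln_div)
  moreover have "1 / (1 + y) - 1 = - (y / (1 + y))" using y by (simp add: field_simps)
  ultimately show ?thesis by linarith
qed

lemma ln2_le: "ln (2::real) \<le> 3/4"
proof -
  have "1 + 3/4 + (3/4)^2/2 \<le> exp (3/4::real)" by (rule exp_lower_Taylor_quadratic) simp
  then have "2 \<le> exp (3/4::real)" by (simp add: power2_eq_square)
  then have "ln 2 \<le> ln (exp (3/4::real))" by (subst ln_le_cancel_iff) auto
  then show ?thesis by simp
qed

lemma exp_big: "exp (31/2::real) \<ge> 10000"
proof -
  have "exp (15::real) = exp 1 ^ 15" using exp_of_nat_mult[of 15 "1::real"] by simp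
  moreover have "exp (1::real) \<ge> 2" using exp_ge_add_one_self[of "1::real"] by simp
  ultimately have "exp (15::real) \<ge> 2 ^ 15" by (metis power_mono zero_le_numeral)
  moreover have "exp (15::real) \<le> exp (31/2)" by simp
  moreover have "(2::real) ^ 15 = 32768" by simp
  ultimately show ?thesis by linarith
qed

lemma lin_aux: "(a::real) \<le> p - 1 \<Longrightarrow> a = c - d \<Longrightarrow> d \<le> 3/4 \<Longrightarrow> c \<le> p - 1/4"
  by linarith

lemma lin_aux2: "(A::real) \<le> H \<Longrightarrow> L / 2 - B \<le> A \<Longrightarrow> B \<le> L / 16 + 1/4 \<Longrightarrow> 7 * L / 16 - 1/4 \<le> H"
  by linarith

lemma real_core:
  fixes k \<Delta> b :: nat and L V :: real
  assumes D1: "1 \<le> \<Delta>" and Dk: "\<Delta> \<le> k" and Lbig: "ln (real k / real \<Delta>) > 31/2"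
  assumes L_def: "L = ln (real k / real \<Delta>)" and V_def: "V = sqrt (real k / real \<Delta>)"
    and b_def: "b = nat \<lfloor>real k * L / (8 * V)\<rfloor>"
  shows "2 ^ (k + \<Delta>) / (\<Prod>v\<in>{b<..k}. 2 + (real k - real v) / (real v * V)) \<le> exp (- sqrt (real k) / 2)"
proof -
  define r where "r = real k / real \<Delta>"
  have kpos: "real k > 0" using D1 Dk by simp
  have Dpos: "real \<Delta> > 0" using D1 by simp
  have rpos: "r > 0" unfolding r_def using kpos Dpos by simp
  have L_def': "L = ln r" unfolding L_def r_def ..
  have "exp L = r" unfolding L_def' using rpos by simp
  moreover have "exp (31/2) < exp L" using Lbig unfolding L_def by simp
  ultimately have r10: "r \<ge> 10000" using exp_big by linarith
  have Vr: "V = sqrt r" unfolding V_def r_def ..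
  have V2: "V * V = r" unfolding Vr using rpos by simp
  have Vpos: "V > 0" unfolding Vr using rpos by simp
  have V100: "V \<ge> 100"
    unfolding Vr using r10 by (intro real_le_rsqrt) (simp add: power2_eq_square)
  have lnV: "ln V = L / 2" unfolding Vr L_def' using rpos by (simp add: ln_sqrt)
  have LV: "L \<le> 2 * V" using ln_le_minus_one[OF Vpos] lnV by linarith
  have Lpos: "L > 31/2" using Lbig unfolding L_def .
  define m where "m = real k / V"
  have mV: "m * V = real k" unfolding m_def using Vpos by simp
  have mpos: "m > 0" unfolding m_def using kpos Vpos by simp
  have m2: "m * m = real k * real \<Delta>"
  proof -
    have "m * m * r = real k * real k" using mV V2 by (metis mult.assoc mult.commute)
    then show ?thesis unfolding r_def using Dpos kpos by (simp add: field_simps)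
  qed
  have msqrt: "sqrt (real k) \<le> m"
  proof -
    have "real k \<le> m * m" using m2 D1 kpos by (simp add: mult_le_cancel_left1)
    then have "(sqrt (real k))^2 \<le> m^2" by (simp add: power2_eq_square)
    from power2_le_imp_le[OF this] show ?thesis using mpos by linarith
  qed
  have m1: "m \<ge> 1"
  proof -
    have "real k \<ge> 1" using D1 Dk by simp
    then have "sqrt (real k) \<ge> 1" by simp
    then show ?thesis using msqrt by linarith
  qed
  have Dm: "100 * real \<Delta> \<le> m"
  proof -
    have "10000 * real \<Delta> \<le> real k" using r10 Dpos unfolding r_def by (simp add: field_simps)
    then have "10000 * real \<Delta> * real \<Delta> \<le> real k * real \<Delta>" using Dpos
      by (intro mult_right_mono) auto
    then have "(100 * real \<Delta>)^2 \<le> m^2" using m2 by (simp add: power2_eq_square algebra_simps)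
    from power2_le_imp_le[OF this] show ?thesis using mpos by linarith
  qed
  define x where "x = real k * L / (8 * V)"
  have xm: "x = m * L / 8" unfolding x_def m_def by simp
  have xnn: "x \<ge> 0" unfolding xm using mpos Lpos by simp
  have bx: "real b \<le> x" unfolding b_def x_def[symmetric] using xnn by linarith
  have bx1: "x < real b + 1" unfolding b_def x_def[symmetric] using xnn by linarith
  have xk: "x \<le> real k"
  proof -
    have "L \<le> 8 * V" using LV Vpos by linarith
    then have "m * L \<le> m * (8 * V)" using mpos by (intro mult_left_mono) auto
    then show ?thesis unfolding xm using mV by (simp add: algebra_simps)
  qed
  have bk: "b \<le> k" using bx xk by linarith
  define y where "y v = (real k - real v) / (2 * real v * V)" for v :: nat
  have rho_eq: "2 + (real k - real v) / (real v * V) = 2 * (1 + y v)" if "v \<in> {b<..k}" for v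
  proof -
    have "real v > 0" using that by auto
    then show ?thesis unfolding y_def using Vpos by (simp add: divide_simps)
  qed
  have ynn: "y v \<ge> 0" if "v \<in> {b<..k}" for v
    unfolding y_def using that Vpos by (auto intro!: divide_nonneg_pos)
  have ysmall: "y v \<le> 8/31" if "v \<in> {b<..k}" for v
  proof -
    have vx: "real v > x" using that bx1 by auto
    have vpos: "real v > 0" using vx xnn by linarith
    have "y v \<le> real k / (2 * real v * V)"
      unfolding y_def using vpos Vpos by (intro divide_right_mono) auto
    also have "\<dots> \<le> real k / (2 * x * V)"
    proof (rule divide_left_mono)
      show "2 * x * V \<le> 2 * real v * V" using vx Vpos by auto
      show "0 < 2 * real v * V * (2 * x * V)"
        using vpos Vpos Lpos mpos unfolding xm by (intro mult_pos_pos) auto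
    qed (use kpos in auto)
    also have "2 * x * V = real k * L / 4" unfolding x_def using Vpos by simp
    also have "real k / (real k * L / 4) = 4 / L" using kpos Lpos by (simp add: field_simps)
    also have "4 / L \<le> 8 / 31" using Lpos by (simp add: field_simps)
    finally show ?thesis .
  qed
  have lnrho: "ln (2 + (real k - real v) / (real v * V)) \<ge> ln 2 + (31/39) * y v" if "v \<in> {b<..k}" for v
  proof -
    have "ln (2 + (real k - real v) / (real v * V)) = ln (2 * (1 + y v))"
      using rho_eq[OF that] by simp
    also have "\<dots> = ln 2 + ln (1 + y v)"
      using ynn[OF that] by (subst ln_mult) auto
    finally have "ln (2 + (real k - real v) / (real v * V)) = ln 2 + ln (1 + y v)" .
    moreover have "ln (1 + y v) \<ge> y v / (1 + y v)" using ln_lower ynn[OF that] by simp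
    moreover have "y v / (1 + y v) \<ge> (31/39) * y v"
    proof -
      have "y v * ((31/39) * (1 + y v)) \<le> y v * 1"
        using ynn[OF that] ysmall[OF that] by (intro mult_left_mono) auto
      then have "(31/39) * y v * (1 + y v) \<le> y v" by (simp add: algebra_simps)
      then show ?thesis using ynn[OF that] by (simp add: field_simps)
    qed
    ultimately show ?thesis by linarith
  qed
  define H where "H = (\<Sum>v\<in>{b<..k}. 1 / real v)"
  have sumy: "(\<Sum>v\<in>{b<..k}. y v) = (m / 2) * H - real (k - b) / (2 * V)"
  proof -
    have "(\<Sum>v\<in>{b<..k}. y v) = (\<Sum>v\<in>{b<..k}. (m / 2) * (1 / real v) - 1 / (2 * V))"
    proof (intro sum.cong refl)
      fix v assume v: "v \<in> {b<..k}"
      then have "real v > 0" by auto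
      then show "y v = (m / 2) * (1 / real v) - 1 / (2 * V)"
        unfolding y_def m_def using Vpos by (simp add: field_simps)
    qed
    also have "\<dots> = (m / 2) * H - real (k - b) / (2 * V)"
      unfolding H_def by (simp add: sum_subtractf sum_distrib_left)
    finally show ?thesis .
  qed
  have kbV: "real (k - b) / (2 * V) \<le> m / 2"
  proof -
    have "real (k - b) \<le> real k" by simp
    then have "real (k - b) / (2 * V) \<le> real k / (2 * V)" using Vpos by (intro divide_right_mono) auto
    then show ?thesis unfolding m_def by simp
  qed
  have Hlow: "H \<ge> 7 * L / 16 - 1/4"
  proof -
    have h1: "H \<ge> ln ((real k + 1) / (real b + 1))" unfolding H_def by (rule harm_ln[OF bk])
    have h2: "ln ((real k + 1) / (real b + 1)) \<ge> ln (real k / (m * (L / 8 + 1)))"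
    proof (subst ln_le_cancel_iff)
      show "0 < real k / (m * (L / 8 + 1))" using kpos mpos Lpos by simp
      show "0 < (real k + 1) / (real b + 1)" by simp
      have "real b + 1 \<le> m * (L / 8 + 1)" using bx m1 unfolding xm by (simp add: algebra_simps)
      then have "real k / (m * (L / 8 + 1)) \<le> real k / (real b + 1)"
        using kpos by (intro divide_left_mono) auto
      also have "\<dots> \<le> (real k + 1) / (real b + 1)" by (intro divide_right_mono) auto
      finally show "real k / (m * (L / 8 + 1)) \<le> (real k + 1) / (real b + 1)" .
    qed
    have h3: "real k / (m * (L / 8 + 1)) = V / (L / 8 + 1)"
      unfolding mV[symmetric] using mpos Lpos by simp
    have h4: "ln (V / (L / 8 + 1)) = L / 2 - ln (L / 8 + 1)"
      using Vpos Lpos lnV by (simp add: ln_div)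
    have h5: "ln (L / 8 + 1) \<le> L / 16 + 1/4"
    proof -
      have "ln ((L / 8 + 1) / 2) \<le> (L / 8 + 1) / 2 - 1" using Lpos by (intro ln_le_minus_one) auto
      moreover have "ln ((L / 8 + 1) / 2) = ln (L / 8 + 1) - ln 2" using Lpos by (simp add: ln_div)
      ultimately have "ln (L / 8 + 1) \<le> (L / 8 + 1) / 2 - 1/4"
        using ln2_le lin_aux by blast
      then show ?thesis by (simp add: field_simps)
    qed
    have h6: "L / 2 - ln (L / 8 + 1) \<le> ln ((real k + 1) / (real b + 1))"
      using h2 unfolding h3 h4 .
    show ?thesis using lin_aux2[OF h1 h6 h5] .
  qed
  have sumy2: "(\<Sum>v\<in>{b<..k}. y v) \<ge> (m / 2) * (7 * L / 16 - 5/4)"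
  proof -
    have "(m / 2) * H \<ge> (m / 2) * (7 * L / 16 - 1/4)" using Hlow mpos by (intro mult_left_mono) auto
    then show ?thesis using sumy kbV by (simp add: algebra_simps)
  qed
  define P where "P = (\<Prod>v\<in>{b<..k}. 2 + (real k - real v) / (real v * V))"
  have fpos: "2 + (real k - real v) / (real v * V) > 0" if "v \<in> {b<..k}" for v
    using rho_eq[OF that] ynn[OF that] by simp
  have Ppos: "P > 0" unfolding P_def using fpos by (intro prod_pos) auto
  have lnP: "ln P = (\<Sum>v\<in>{b<..k}. ln (2 + (real k - real v) / (real v * V)))"
    unfolding P_def using fpos by (intro ln_prod) (auto simp: less_imp_neq[symmetric])
  have lnP_ge: "ln P \<ge> real (k - b) * ln 2 + (31/39) * (\<Sum>v\<in>{b<..k}. y v)"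
  proof -
    have "ln P \<ge> (\<Sum>v\<in>{b<..k}. ln 2 + (31/39) * y v)" unfolding lnP by (intro sum_mono lnrho)
    moreover have "(\<Sum>v\<in>{b<..k}. ln 2 + (31/39) * y v) = real (k - b) * ln 2 + (31/39) * (\<Sum>v\<in>{b<..k}. y v)"
      by (simp add: sum.distrib sum_distrib_left)
    ultimately show ?thesis by simp
  qed
  have ln2nn: "ln (2::real) \<ge> 0" by simp
  have key: "real (k + \<Delta>) * ln 2 - ln P \<le> - sqrt (real k) / 2"
  proof -
    have "real (k + \<Delta>) * ln 2 - ln P \<le> real (k + \<Delta>) * ln 2 - real (k - b) * ln 2 - (31/39) * (\<Sum>v\<in>{b<..k}. y v)"
      using lnP_ge by linarith
    also have "real (k + \<Delta>) * ln 2 - real (k - b) * ln 2 = (real b + real \<Delta>) * ln 2"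
      using bk by (simp add: of_nat_diff algebra_simps)
    also have "(real b + real \<Delta>) * ln 2 \<le> (m * L / 8 + m / 100) * (3/4)"
      using bx Dm ln2nn ln2_le unfolding xm
      by (intro mult_mono) auto
    finally have A: "real (k + \<Delta>) * ln 2 - ln P \<le> (m * L / 8 + m / 100) * (3/4) - (31/39) * (\<Sum>v\<in>{b<..k}. y v)"
      by simp
    have B: "(31/39) * (\<Sum>v\<in>{b<..k}. y v) \<ge> (31/39) * ((m / 2) * (7 * L / 16 - 5/4))"
      using sumy2 by simp
    have C: "m * (3 * L / 32 + 3 / 400 - (31/78) * (7 * L / 16 - 5/4) + 1/2) \<le> 0"
    proof -
      have "3 * L / 32 + 3 / 400 - (31/78) * (7 * L / 16 - 5/4) + 1/2 \<le> 0"
        using Lpos by (simp add: field_simps)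
      then show ?thesis using mpos by (intro mult_nonneg_nonpos) auto
    qed
    have "(m * L / 8 + m / 100) * (3/4) - (31/39) * ((m / 2) * (7 * L / 16 - 5/4)) \<le> - m / 2"
      using C by (simp add: algebra_simps)
    then show ?thesis using A B msqrt by linarith
  qed
  have "2 ^ (k + \<Delta>) / P = exp (real (k + \<Delta>) * ln 2 - ln P)"
  proof -
    have e1: "exp (real (k + \<Delta>) * ln 2) = 2 ^ (k + \<Delta>)"
      by (subst exp_of_nat_mult) simp
    have e2: "exp (ln P) = P" using Ppos by simp
    show ?thesis unfolding exp_diff e1 e2 ..
  qed
  also have "\<dots> \<le> exp (- sqrt (real k) / 2)" using key by simp
  finally show ?thesis unfolding P_def .
qed


lemma V_big:
  fixes k \<Delta> :: nat
  assumes D1: "1 \<le> \<Delta>" and Dk: "\<Delta> \<le> k" and Lbig: "ln (real k / real \<Delta>) > 31/2"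
  shows "sqrt (real k / real \<Delta>) \<ge> 100"
proof -
  define r where "r = real k / real \<Delta>"
  have rpos: "r > 0" unfolding r_def using D1 Dk by simp
  have "exp (ln r) = r" using rpos by simp
  moreover have "exp (31/2) < exp (ln r)" using Lbig unfolding r_def by simp
  ultimately have r10: "r \<ge> 10000" using exp_big by linarith
  show ?thesis unfolding r_def[symmetric] using r10 by (intro real_le_rsqrt) (simp add: power2_eq_square)
qed

theorem mainTheorem17:
  fixes k \<Delta> :: nat
  assumes "k > 1" and "1 \<le> \<Delta>" and "\<Delta> \<le> k"
  shows "\<exists>(d::nat) X. finite X \<and> X \<noteq> {} \<and> X \<subseteq> Rd d \<and>
    measure_pmf.prob (kpp d X (k + \<Delta>))
      {C. cost_set d X C > 1/8 * ln (real k / real \<Delta>) * OPT d k X}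
    \<ge> 1 - exp (- sqrt (real k) / 2)"
proof -
  define L where "L = ln (real k / real \<Delta>)"
  define n where "n = 128 * k"
  have k1: "k \<ge> 1" using assms by simp
  have n1: "n \<ge> 1" unfolding n_def using k1 by simp
  have n4: "real n \<ge> 4 * real k" unfolding n_def by simp
  have Lnn: "L \<ge> 0" unfolding L_def using assms by simp
  have N2k: "k + \<Delta> \<le> 2 * k" using assms by simp
  show ?thesis
  proof (cases "L \<le> 31/2")
    case True
    interpret I: inst k n 1 using k1 n1 by unfold_locales
    define M where "M = kpp I.dd I.XX (k + \<Delta>)"
    define A where "A = {C. cost_set I.dd I.XX C > 1/8 * L * OPT I.dd k I.XX}"
    have "AE C in M. C \<in> A"
    proof (subst AE_measure_pmf_iff, intro ballI)
      fix C assume "C \<in> set_pmf M"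
      then have C: "C \<subseteq> I.XX" "card C \<le> k + \<Delta>" "C \<noteq> {}" using I.kpp_supp[of C "k + \<Delta>"] k1 unfolding M_def by auto
      have "cost_set I.dd I.XX C \<ge> 2 * (real (k * n) - real (card C))" by (rule I.cost_set_lb2[OF C(1,3)])
      moreover have "real (card C) \<le> 2 * real k" using C(2) N2k by simp
      moreover have opt: "OPT I.dd k I.XX \<le> real (k * n)" by (rule I.OPT_le) simp
      moreover have "1/8 * L * OPT I.dd k I.XX \<le> 1/8 * L * real (k * n)"
        using opt Lnn by (intro mult_left_mono) auto
      moreover have "1/8 * L * real (k * n) \<le> 31/16 * real (k * n)"
        using True by (intro mult_right_mono) auto
      moreover have "31/16 * real (k * n) < 2 * (real (k * n) - 2 * real k)"
        unfolding n_def using k1 by simp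
      ultimately show "C \<in> A" unfolding A_def by simp
    qed
    then have "measure_pmf.prob M A = 1" by (subst measure_pmf.prob_eq_1) auto
    moreover have "exp (- sqrt (real k) / 2) > 0" by simp
    ultimately show ?thesis using I.finite_XX I.XX_ne I.XX_Rd unfolding M_def A_def L_def
      by (intro exI[of _ I.dd] exI[of _ I.XX]) auto
  next
    case False
    then have Lbig: "L > 31/2" by simp
    define V where "V = sqrt (real k / real \<Delta>)"
    have V100: "V \<ge> 100" unfolding V_def using V_big assms Lbig unfolding L_def by auto
    define a where "a = sqrt (V / 2 - 1)"
    have a2: "a^2 = V / 2 - 1" unfolding a_def using V100 by simp
    have apos: "a \<noteq> 0" unfolding a_def using V100 by simp
    interpret I: inst k n a using k1 n1 by unfold_locales
    have IV: "I.V = V" unfolding I.V_def a2 by simp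
    define b where "b = nat \<lfloor>real k * L / (8 * V)\<rfloor>"
    define M where "M = kpp I.dd I.XX (k + \<Delta>)"
    define A where "A = {C. cost_set I.dd I.XX C > 1/8 * L * OPT I.dd k I.XX}"
    have beta_eq: "I.beta b = (\<Prod>v\<in>{b<..k}. 2 + (real k - real v) / (real v * V))"
      unfolding I.beta_def I.rho_def IV ..
    have core: "2 ^ (k + \<Delta>) / I.beta b \<le> exp (- sqrt (real k) / 2)"
      unfolding beta_eq
      by (rule real_core[OF assms(2,3) Lbig[unfolded L_def] L_def V_def b_def])
    have bad: "measure_pmf.prob M {C. I.u C \<le> b} \<le> exp (- sqrt (real k) / 2)"
      using I.markov[OF n4 N2k, of b] core unfolding M_def by linarith
    have Vpos: "V > 0" using V100 by simp
    have xnn: "real k * L / (8 * V) \<ge> 0" using Lnn Vpos by simp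
    have b1: "real k * L / (8 * V) < real b + 1" unfolding b_def using xnn by linarith
    have Vb: "real k * L / 8 < V * (real b + 1)"
    proof -
      have "real k * L / (8 * V) * V < (real b + 1) * V" using b1 Vpos by (intro mult_strict_right_mono) auto
      then show ?thesis using Vpos by (simp add: field_simps)
    qed
    have "AE C in M. C \<in> UNIV - {C. I.u C \<le> b} \<longrightarrow> C \<in> A"
    proof (subst AE_measure_pmf_iff, intro ballI impI)
      fix C assume "C \<in> set_pmf M" and ub: "C \<in> UNIV - {C. I.u C \<le> b}"
      then have C: "C \<subseteq> I.XX" "C \<noteq> {}" using I.kpp_supp[of C "k + \<Delta>"] k1 unfolding M_def by auto
      have ub': "real b + 1 \<le> real (I.u C)" using ub by auto
      have "cost_set I.dd I.XX C \<ge> I.V * card (I.UX C) + 2 * card (I.XX - I.UX C - C)"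
        by (rule I.cost_set_lb[OF C])
      then have c1: "cost_set I.dd I.XX C \<ge> V * (real (I.u C) * real n)"
        using I.card_UX[of C] IV by simp
      have opt: "OPT I.dd k I.XX \<le> real (k * n)" by (rule I.OPT_le[OF apos])
      have "1/8 * L * OPT I.dd k I.XX \<le> 1/8 * L * real (k * n)"
        using opt Lnn by (intro mult_left_mono) auto
      also have "\<dots> = real k * L / 8 * real n" by simp
      also have "\<dots> < V * (real b + 1) * real n"
        using Vb n1 by (intro mult_strict_right_mono) auto
      also have "\<dots> \<le> V * (real (I.u C) * real n)"
        using ub' Vpos by (simp add: mult_left_mono mult_right_mono)
      also have "\<dots> \<le> cost_set I.dd I.XX C" by (rule c1)
      finally show "C \<in> A" unfolding A_def by simp
    qed
    then have "measure_pmf.prob M (UNIV - {C. I.u C \<le> b}) \<le> measure_pmf.prob M A"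
      by (intro measure_pmf.finite_measure_mono_AE) auto
    moreover have "measure_pmf.prob M (UNIV - {C. I.u C \<le> b}) = 1 - measure_pmf.prob M {C. I.u C \<le> b}"
      using measure_pmf.prob_compl[of "{C. I.u C \<le> b}" M] by simp
    ultimately have "measure_pmf.prob M A \<ge> 1 - exp (- sqrt (real k) / 2)" using bad by linarith
    then show ?thesis using I.finite_XX I.XX_ne I.XX_Rd unfolding M_def A_def L_def
      by (intro exI[of _ I.dd] exI[of _ I.XX]) auto
  qed
qed

end
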